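(* Let $\Sigma$ be a set and let $1\leq p<\infty$. Suppose $d$ is a separating quasi-metric on $\Sigma$ and $\gamma,\delta\in\Gamma_{\mathrm{CL}}(\Sigma)$ are composition-length gap penalties such that for all $a,b\in\Sigma$, \[\gamma(b)-\gamma(a)\leq d^p(a,b)\quad\text{and}\quad \delta(a)-\delta(b)\leq d^p(a,b).\] Let $\alpha=\gamma^{1/p}$ and $\beta=\delta^{1/p}$. Then the $\ell^p$ edit distance $D$ on $\Sigma^*$ extending $d$, $\alpha$ and $\beta$ is a separating quasi-metric on $\Sigma^*$.
   Context: $\Sigma^*$ is the free monoid on $\Sigma$ (finite words, operation concatenation, identity the empty word $e$), and $\Sigma^+=\Sigma^*\setminus\{e\}$. For $w=w_1\cdots w_n$ ($w_i\in\Sigma$) write $|w|=n$, $\bar w_k=w_1\cdots w_k$ and $\bar w_0=e$. A quasi-metric on a set $X$ is a map $q:X\times X\to\mathbb{R}_{\ge0}$ with $q(x,y)=q(y,x)=0\iff x=y$ and $q(x,z)\le q(x,y)+q(y,z)$; it is separating if $q(x,y)=0$ implies $x=y$. A gap penalty over $\Sigma^+$ is a positive function $\gamma:\Sigma^+\to\mathbb{R}$ with $\gamma(u)+\gamma(v)\ge\gamma(uv)$ for all $u,v\in\Sigma^+$; $\Gamma(\Sigma)$ denotes the set of these. A function $\gamma$ is increasing if $\gamma(uxv)\ge\gamma(uv)$ for all $u,v,x\in\Sigma^*$. A composition-length gap penalty is an increasing $\gamma\in\Gamma(\Sigma)$ of the form $\gamma(z)=\sum_i\phi(z_i)+\psi(|z|)$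 for all $z\in\Sigma^+$, for some $\phi:\Sigma\to\mathbb{R}$ and $\psi:\mathbb{N}\to\mathbb{R}$; $\Gamma_{\mathrm{CL}}(\Sigma)$ denotes the set of these. $\ell^p$ edit distance: given $d:\Sigma\times\Sigma\to\mathbb{R}$, $1\le p<\infty$, and $\alpha,\beta:\Sigma^+\to\mathbb{R}$ with $\alpha^p,\beta^p\in\Gamma(\Sigma)$, for $x,y\in\Sigma^*$ with $m=|x|$, $n=|y|$ define recursively $D(e,e)=0$, $D(e,\bar y_j)=\alpha(\bar y_j)$ ($1\le j\le n$), $D(\bar x_i,e)=\beta(\bar x_i)$ ($1\le i\le m$), and for $1\le i\le m$, $1\le j\le n$, \[D(\bar x_i,\bar y_j)=\Big(\min\Big\{D^p(\bar x_{i-1},\bar y_{j-1})+d^p(x_i,y_j),\ \min_{1\le k\le j}\{D^p(\bar x_i,\bar y_{j-k})+\alpha^p(y_{j-k+1}\cdots y_j)\},\ \min_{1\le k\le i}\{D^p(\bar x_{i-k},\bar y_j)+\beta^p(x_{i-k+1}\cdots x_i)\}\Big\}\Big)^{1/p},\] and set $D(x,y)=D(\bar x_m,\bar y_n)$. *)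

theory Defs
  imports Complex_Main
begin

definition quasi_metric :: "('b \<Rightarrow> 'b \<Rightarrow> real) \<Rightarrow> bool" where
  "quasi_metric q \<longleftrightarrow>
     (\<forall>x y. q x y \<ge> 0) \<and>
     (\<forall>x y. (q x y = 0 \<and> q y x = 0) \<longleftrightarrow> x = y) \<and>
     (\<forall>x y z. q x z \<le> q x y + q y z)"

definition separating :: "('b \<Rightarrow> 'b \<Rightarrow> real) \<Rightarrow> bool" where
  "separating q \<longleftrightarrow> (\<forall>x y. q x y = 0 \<longrightarrow> x = y)"

(* gap penalty: only its values on nonempty words matter *)
definition gap_penalty :: "('a list \<Rightarrow> real) \<Rightarrow> bool" where
  "gap_penalty g \<longleftrightarrow>
     (\<forall>u. u \<noteq> [] \<longrightarrow> g u > 0) \<and>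
     (\<forall>u v. u \<noteq> [] \<longrightarrow> v \<noteq> [] \<longrightarrow> g (u @ v) \<le> g u + g v)"

definition increasing_gp :: "('a list \<Rightarrow> real) \<Rightarrow> bool" where
  "increasing_gp g \<longleftrightarrow> (\<forall>u x v. u @ v \<noteq> [] \<longrightarrow> g (u @ v) \<le> g (u @ x @ v))"

definition CL_gap_penalty :: "('a list \<Rightarrow> real) \<Rightarrow> bool" where
  "CL_gap_penalty g \<longleftrightarrow> gap_penalty g \<and> increasing_gp g \<and>
     (\<exists>(\<phi>::'a \<Rightarrow> real) (\<psi>::nat \<Rightarrow> real).
        \<forall>z. z \<noteq> [] \<longrightarrow> g z = sum_list (map \<phi> z) + \<psi> (length z))"

(* Dtab p d \<alpha> \<beta> x y i j = D(x_1..x_i, y_1..y_j) *)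
function Dtab :: "real \<Rightarrow> ('a \<Rightarrow> 'a \<Rightarrow> real) \<Rightarrow> ('a list \<Rightarrow> real) \<Rightarrow> ('a list \<Rightarrow> real)
                  \<Rightarrow> 'a list \<Rightarrow> 'a list \<Rightarrow> nat \<Rightarrow> nat \<Rightarrow> real" where
  "Dtab p d \<alpha> \<beta> x y i j =
    (if i = 0 \<and> j = 0 then 0
     else if i = 0 then \<alpha> (take j y)
     else if j = 0 then \<beta> (take i x)
     else (Min ({(Dtab p d \<alpha> \<beta> x y (i - 1) (j - 1)) powr p + (d (x ! (i - 1)) (y ! (j - 1))) powr p}
            \<union> set (map (\<lambda>k. (Dtab p d \<alpha> \<beta> x y i (j - k)) powr p + (\<alpha> (drop (j - k) (take j y))) powr p) [1..<Suc j])
            \<union> set (map (\<lambda>k. (Dtab p d \<alpha> \<beta> x y (i - k) j) powr p + (\<beta> (drop (i - k) (take i x))) powr p) [1..<Suc i])))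
          powr (1 / p))"
  by pat_completeness auto
termination
  by (relation "measure (\<lambda>(p, d, \<alpha>, \<beta>, x, y, i, j). i + j)") auto

definition lp_edit_distance ::
  "real \<Rightarrow> ('a \<Rightarrow> 'a \<Rightarrow> real) \<Rightarrow> ('a list \<Rightarrow> real) \<Rightarrow> ('a list \<Rightarrow> real) \<Rightarrow> 'a list \<Rightarrow> 'a list \<Rightarrow> real" where
  "lp_edit_distance p d \<alpha> \<beta> x y = Dtab p d \<alpha> \<beta> x y (length x) (length y)"

end

theory Submission
  imports Defs "HOL-Analysis.Convex" "HOL-Library.Multiset"
begin

declare Dtab.simps[simp del]

lemma Dtab_00: "Dtab p d al be x y 0 0 = 0" by (subst Dtab.simps) simp
lemma Dtab_0j: "0 < j \<Longrightarrow> Dtab p d al be x y 0 j = al (take j y)" by (subst Dtab.simps) simp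
lemma Dtab_i0: "0 < i \<Longrightarrow> Dtab p d al be x y i 0 = be (take i x)" by (subst Dtab.simps) simp

lemma Dtab_transpose:
  "Dtab p d al be x y i j = Dtab p (\<lambda>a b. d b a) be al y x j i"
proof (induction "i+j" arbitrary: i j rule: less_induct)
  case less
  show ?case
  proof (cases "i = 0 \<or> j = 0")
    case True
    then show ?thesis by (cases "i = 0"; cases "j = 0") (simp_all add: Dtab_00 Dtab_0j Dtab_i0)
  next
    case False
    then have ij: "0 < i" "0 < j" by auto
    have e1: "set (map (\<lambda>k. (Dtab p d al be x y i (j - k)) powr p + (al (drop (j - k) (take j y))) powr p) [1..<Suc j])
       = set (map (\<lambda>k. (Dtab p (\<lambda>a b. d b a) be al y x (j - k) i) powr p + (al (drop (j - k) (take j y))) powr p) [1..<Suc j])"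
      using ij by (auto intro!: image_cong simp: less.hyps)
    have e2: "set (map (\<lambda>k. (Dtab p d al be x y (i - k) j) powr p + (be (drop (i - k) (take i x))) powr p) [1..<Suc i])
       = set (map (\<lambda>k. (Dtab p (\<lambda>a b. d b a) be al y x j (i - k)) powr p + (be (drop (i - k) (take i x))) powr p) [1..<Suc i])"
      using ij by (auto intro!: image_cong simp: less.hyps)
    have e3: "Dtab p d al be x y (i - 1) (j - 1) = Dtab p (\<lambda>a b. d b a) be al y x (j-1) (i-1)"
      using less.hyps[of "i-1" "j-1"] ij by simp
    have c: "\<not>(i=0\<and>j=0)" "\<not>(j=0\<and>i=0)" "(i=0) = False" "(j=0) = False" using ij by auto
    show ?thesis
      apply (subst (1 2) Dtab.simps)
      apply (simp only: c if_False e1 e2 e3)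
      by (simp only: Un_ac)
  qed
qed


lemma powr_convex0:
  fixes p l a b :: real
  assumes p: "1 \<le> p" and a: "0 \<le> a" and b: "0 \<le> b" and l: "0 \<le> l" "l \<le> 1"
  shows "(l*a + (1-l)*b) powr p \<le> l * a powr p + (1-l) * b powr p"
proof (cases "a = 0 \<or> b = 0")
  case True
  have k: "t powr p \<le> t" if "0 \<le> t" "t \<le> 1" for t :: real
    using powr_mono'[of 1 p t] that p by simp
  show ?thesis
  proof (cases "a = 0")
    case True
    have "((1-l)*b) powr p = (1-l) powr p * b powr p" using l b by (simp add: powr_mult)
    also have "\<dots> \<le> (1-l) * b powr p" using k[of "1-l"] l by (intro mult_right_mono) auto
    finally show ?thesis using True p by simp
  next
    case False
    then have "b = 0" using \<open>a = 0 \<or> b = 0\<close> by simp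
    have "(l*a) powr p = l powr p * a powr p" using l a by (simp add: powr_mult)
    also have "\<dots> \<le> l * a powr p" using k[of "l"] l by (intro mult_right_mono) auto
    finally show ?thesis using \<open>b = 0\<close> p by simp
  qed
next
  case False
  then have "a \<in> {0<..}" "b \<in> {0<..}" using a b by auto
  from convex_onD[OF powr_convex[OF p], of "1-l" a b, OF _ _ this] l
  show ?thesis by simp
qed

lemma minkowski2:
  fixes p u1 u2 v1 v2 :: real
  assumes p: "1 \<le> p" and nn: "0 \<le> u1" "0 \<le> u2" "0 \<le> v1" "0 \<le> v2"
  shows "((u1+v1) powr p + (u2+v2) powr p) powr (1/p)
         \<le> (u1 powr p + u2 powr p) powr (1/p) + (v1 powr p + v2 powr p) powr (1/p)"
proof -
  define U where "U = (u1 powr p + u2 powr p) powr (1/p)"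
  define V where "V = (v1 powr p + v2 powr p) powr (1/p)"
  have p0: "p > 0" using p by simp
  have Up: "U powr p = u1 powr p + u2 powr p" unfolding U_def using p0 by (simp add: powr_powr)
  have Vp: "V powr p = v1 powr p + v2 powr p" unfolding V_def using p0 by (simp add: powr_powr)
  have rt: "(w powr p) powr (1/p) = w" if "0 \<le> w" for w using that p0 by (simp add: powr_powr)
  show ?thesis
  proof (cases "U = 0 \<or> V = 0")
    case True
    then show ?thesis
    proof
      assume "U = 0"
      then have "u1 = 0" "u2 = 0" using nn unfolding U_def
        by (smt (verit) powr_eq_0_iff powr_ge_zero)+
      then show ?thesis unfolding U_def V_def using p0 by simp
    next
      assume "V = 0"
      then have "v1 = 0" "v2 = 0" using nn unfolding V_def
        by (smt (verit) powr_eq_0_iff powr_ge_zero)+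
      then show ?thesis unfolding U_def V_def using p0 by simp
    qed
  next
    case False
    then have U0: "U > 0" and V0: "V > 0" unfolding U_def V_def by auto
    define l where "l = U / (U+V)"
    have l: "0 \<le> l" "l \<le> 1" using U0 V0 unfolding l_def by auto
    have 1: "1 - l = V / (U+V)" unfolding l_def using U0 V0 by (simp add: field_simps)
    have eq: "(ui+vi)/(U+V) = l*(ui/U) + (1-l)*(vi/V)" for ui vi
    proof -
      have "l*(ui/U) = ui/(U+V)" unfolding l_def using U0 V0 by simp
      moreover have "(1-l)*(vi/V) = vi/(U+V)" unfolding 1 using U0 V0 by simp
      ultimately show ?thesis by (simp add: add_divide_distrib)
    qed
    have c: "((ui+vi)/(U+V)) powr p \<le> l*(ui powr p / U powr p) + (1-l)*(vi powr p / V powr p)"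
      if "0 \<le> ui" "0 \<le> vi" for ui vi
      unfolding eq using powr_convex0[OF p _ _ l, of "ui/U" "vi/V"] that U0 V0
      by (simp add: powr_divide)
    have "((u1+v1)/(U+V)) powr p + ((u2+v2)/(U+V)) powr p
          \<le> l*((u1 powr p + u2 powr p) / U powr p) + (1-l)*((v1 powr p + v2 powr p) / V powr p)"
      using c[of u1 v1] c[of u2 v2] nn by (simp add: add_divide_distrib algebra_simps)
    also have "\<dots> = 1" using U0 V0 by (simp add: Up[symmetric] Vp[symmetric])
    finally have F: "((u1+v1)/(U+V)) powr p + ((u2+v2)/(U+V)) powr p \<le> 1" .
    have pos: "(U+V) powr p > 0" using U0 V0 by simp
    have "(u1+v1) powr p + (u2+v2) powr p
          = (((u1+v1)/(U+V)) powr p + ((u2+v2)/(U+V)) powr p) * (U+V) powr p"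
      using pos by (simp add: powr_divide field_simps)
    also have "\<dots> \<le> 1 * (U+V) powr p" using F pos by (intro mult_right_mono) auto
    finally have "(u1+v1) powr p + (u2+v2) powr p \<le> (U+V) powr p" by simp
    then have "((u1+v1) powr p + (u2+v2) powr p) powr (1/p) \<le> ((U+V) powr p) powr (1/p)"
      using p0 by (intro powr_mono2) auto
    also have "\<dots> = U + V" using rt U0 V0 by simp
    finally show ?thesis unfolding U_def V_def .
  qed
qed


lemma mink_step:
  fixes p X X' A' B' A B a b c :: real
  assumes p: "1 \<le> p"
    and X0: "0 \<le> X" and nn: "0 \<le> X'" "0 \<le> A'" "0 \<le> B'" "0 \<le> a" "0 \<le> b" "0 \<le> c"
    and h1: "X \<le> X' + c"
    and h2: "X' powr (1/p) \<le> A' powr (1/p) + B' powr (1/p)"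
    and h3: "c powr (1/p) \<le> a powr (1/p) + b powr (1/p)"
    and h4: "A' + a \<le> A" and h5: "B' + b \<le> B"
  shows "X powr (1/p) \<le> A powr (1/p) + B powr (1/p)"
proof -
  have p0: "p > 0" using p by simp
  have rt: "(w powr (1/p)) powr p = w" if "0 \<le> w" for w using that p0 by (simp add: powr_powr)
  have up: "w \<le> (s) powr p" if "0 \<le> w" "w powr (1/p) \<le> s" for w s
  proof -
    have "(w powr (1/p)) powr p \<le> s powr p" using that p0 by (intro powr_mono2) auto
    then show ?thesis using rt that by simp
  qed
  define u1 where "u1 = A' powr (1/p)"
  define u2 where "u2 = a powr (1/p)"
  define v1 where "v1 = B' powr (1/p)"
  define v2 where "v2 = b powr (1/p)"
  have "X \<le> (u1+v1) powr p + (u2+v2) powr p"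
    using h1 up[OF nn(1) h2] up[OF nn(6) h3] unfolding u1_def u2_def v1_def v2_def by simp
  then have "X powr (1/p) \<le> ((u1+v1) powr p + (u2+v2) powr p) powr (1/p)"
    using p0 X0 by (intro powr_mono2) auto
  also have "\<dots> \<le> (u1 powr p + u2 powr p) powr (1/p) + (v1 powr p + v2 powr p) powr (1/p)"
    by (rule minkowski2[OF p]) (auto simp: u1_def u2_def v1_def v2_def)
  also have "\<dots> = (A' + a) powr (1/p) + (B' + b) powr (1/p)"
    unfolding u1_def u2_def v1_def v2_def using rt nn by simp
  also have "\<dots> \<le> A powr (1/p) + B powr (1/p)"
    using h4 h5 nn p0 by (intro add_mono powr_mono2) auto
  finally show ?thesis .
qed

lemma drop_take_split:
  assumes "a \<le> b" "b \<le> c" "c \<le> length y"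
  shows "drop a (take c y) = drop a (take b y) @ drop b (take c y)"
proof -
  have "take c y = take b y @ drop b (take c y)"
    using assms by (metis append_take_drop_id min.absorb1 take_take)
  moreover have "length (take b y) = b" using assms by simp
  ultimately show ?thesis using assms by (metis drop_append diff_is_0_eq drop_0)
qed

lemma drop_take_last:
  assumes "0 < j" "j \<le> length y"
  shows "drop (j-1) (take j y) = [y!(j-1)]"
proof -
  obtain n where n: "j = Suc n" using assms by (cases j) auto
  then show ?thesis using assms by (simp add: take_Suc_conv_app_nth)
qed




lemma CL_perm:
  assumes "CL_gap_penalty g" "mset u = mset v"
  shows "g u = g v"
proof (cases "u = []")
  case True then show ?thesis using assms(2) by simp
next
  case False
  then have v: "v \<noteq> []" using assms(2) by auto
  obtain \<phi> \<psi> where f: "\<And>z. z \<noteq> [] \<Longrightarrow> g z = sum_list (map \<phi> z) + \<psi> (length z)"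
    using assms(1) unfolding CL_gap_penalty_def by blast
  have "sum_list (map \<phi> u) = sum_list (map \<phi> v)"
    by (metis assms(2) mset_map sum_mset_sum_list)
  moreover have "length u = length v" by (metis assms(2) size_mset)
  ultimately show ?thesis using f[OF False] f[OF v] by simp
qed

lemma CL_subst:
  assumes "CL_gap_penalty g"
  shows "g (A @ [b] @ P) = g (A @ [a] @ P) + (g [b] - g [a])"
proof -
  obtain \<phi> \<psi> where f: "\<And>z. z \<noteq> [] \<Longrightarrow> g z = sum_list (map \<phi> z) + \<psi> (length z)"
    using assms(1) unfolding CL_gap_penalty_def by blast
  show ?thesis by (simp add: f)
qed

lemma blk_ne: "1 \<le> k \<Longrightarrow> k \<le> j \<Longrightarrow> j \<le> length y \<Longrightarrow> drop (j-k) (take j y) \<noteq> []"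
proof -
  assume a: "1 \<le> k" "k \<le> j" "j \<le> length y"
  then have "j - k < j" by auto
  then show ?thesis using a by simp
qed

locale tab =
  fixes p :: real and d :: "'a \<Rightarrow> 'a \<Rightarrow> real" and g h :: "'a list \<Rightarrow> real"
  assumes p1: "1 \<le> p" and dnn: "\<And>a b. 0 \<le> d a b" and gg: "gap_penalty g" and hg: "gap_penalty h"
begin

abbreviation "DT \<equiv> Dtab p d (\<lambda>w. g w powr (1/p)) (\<lambda>w. h w powr (1/p))"

definition E :: "'a list \<Rightarrow> 'a list \<Rightarrow> nat \<Rightarrow> nat \<Rightarrow> real" where
  "E x y i j = DT x y i j powr p"

lemma p0: "0 < p" using p1 by simp
lemma gpos: "u \<noteq> [] \<Longrightarrow> 0 < g u" using gg unfolding gap_penalty_def by auto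
lemma hpos: "u \<noteq> [] \<Longrightarrow> 0 < h u" using hg unfolding gap_penalty_def by auto
lemma gsub: "u \<noteq> [] \<Longrightarrow> v \<noteq> [] \<Longrightarrow> g (u @ v) \<le> g u + g v" using gg unfolding gap_penalty_def by auto
lemma hsub: "u \<noteq> [] \<Longrightarrow> v \<noteq> [] \<Longrightarrow> h (u @ v) \<le> h u + h v" using hg unfolding gap_penalty_def by auto
lemma gpp: "u \<noteq> [] \<Longrightarrow> (g u powr (1/p)) powr p = g u" using gpos[of u] p0 by (simp add: powr_powr)
lemma hpp: "u \<noteq> [] \<Longrightarrow> (h u powr (1/p)) powr p = h u" using hpos[of u] p0 by (simp add: powr_powr)

lemma E_nn: "0 \<le> E x y i j" by (simp add: E_def)
lemma DT_nn: "0 \<le> DT x y i j" by (subst Dtab.simps) auto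
lemma DT_E: "DT x y i j = E x y i j powr (1/p)"
  unfolding E_def using p0 DT_nn[of x y i j] by (simp add: powr_powr)

lemma E00: "E x y 0 0 = 0" by (simp add: E_def Dtab_00)
lemma E0j: assumes "0 < j" "j \<le> length y" shows "E x y 0 j = g (take j y)"
proof -
  have "take j y \<noteq> []" using assms by (cases y) auto
  then show ?thesis using assms by (simp add: E_def Dtab_0j gpp)
qed
lemma Ei0: assumes "0 < i" "i \<le> length x" shows "E x y i 0 = h (take i x)"
proof -
  have "take i x \<noteq> []" using assms by (cases x) auto
  then show ?thesis using assms by (simp add: E_def Dtab_i0 hpp)
qed

lemma E_Min:
  assumes "0 < i" "0 < j" "i \<le> length x" "j \<le> length y"
  shows "E x y i j = Min ({E x y (i-1) (j-1) + d (x!(i-1)) (y!(j-1)) powr p}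
          \<union> (\<lambda>k. E x y i (j-k) + g (drop (j-k) (take j y))) ` {1..j}
          \<union> (\<lambda>k. E x y (i-k) j + h (drop (i-k) (take i x))) ` {1..i})" (is "_ = Min ?M")
proof -
  have s1: "set (map (\<lambda>k. (DT x y i (j - k)) powr p + ((\<lambda>w. g w powr (1/p)) (drop (j - k) (take j y))) powr p) [1..<Suc j])
        = (\<lambda>k. E x y i (j-k) + g (drop (j-k) (take j y))) ` {1..j}"
  proof -
    have "set (map (\<lambda>k. (DT x y i (j - k)) powr p + ((\<lambda>w. g w powr (1/p)) (drop (j - k) (take j y))) powr p) [1..<Suc j])
      = (\<lambda>k. (DT x y i (j - k)) powr p + ((\<lambda>w. g w powr (1/p)) (drop (j - k) (take j y))) powr p) ` {1..j}"
      by (simp only: set_map set_upt atLeastLessThanSuc_atLeastAtMost)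
    also have "\<dots> = (\<lambda>k. E x y i (j-k) + g (drop (j-k) (take j y))) ` {1..j}"
    proof (rule image_cong)
      fix k assume "k \<in> {1..j}"
      then have "j - k < j" by auto
      then have "drop (j-k) (take j y) \<noteq> []" using assms by simp
      then show "(DT x y i (j - k)) powr p + ((\<lambda>w. g w powr (1/p)) (drop (j - k) (take j y))) powr p
               = E x y i (j-k) + g (drop (j-k) (take j y))" by (simp add: E_def gpp)
    qed simp
    finally show ?thesis .
  qed
  have s2: "set (map (\<lambda>k. (DT x y (i - k) j) powr p + ((\<lambda>w. h w powr (1/p)) (drop (i - k) (take i x))) powr p) [1..<Suc i])
        = (\<lambda>k. E x y (i-k) j + h (drop (i-k) (take i x))) ` {1..i}"
  proof -
    have "set (map (\<lambda>k. (DT x y (i - k) j) powr p + ((\<lambda>w. h w powr (1/p)) (drop (i - k) (take i x))) powr p) [1..<Suc i])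
      = (\<lambda>k. (DT x y (i - k) j) powr p + ((\<lambda>w. h w powr (1/p)) (drop (i - k) (take i x))) powr p) ` {1..i}"
      by (simp only: set_map set_upt atLeastLessThanSuc_atLeastAtMost)
    also have "\<dots> = (\<lambda>k. E x y (i-k) j + h (drop (i-k) (take i x))) ` {1..i}"
    proof (rule image_cong)
      fix k assume "k \<in> {1..i}"
      then have "i - k < i" by auto
      then have "drop (i-k) (take i x) \<noteq> []" using assms by simp
      then show "(DT x y (i - k) j) powr p + ((\<lambda>w. h w powr (1/p)) (drop (i - k) (take i x))) powr p
               = E x y (i-k) j + h (drop (i-k) (take i x))" by (simp add: E_def hpp)
    qed simp
    finally show ?thesis .
  qed
  have c: "\<not>(i=0\<and>j=0)" "(i=0) = False" "(j=0) = False" using assms by auto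
  have raw: "DT x y i j = Min ?M powr (1/p)"
    apply (subst Dtab.simps)
    apply (simp only: c if_False s1 s2)
    by (simp add: E_def)
  have fin: "finite ?M" by simp
  have "Min ?M \<in> ?M" using fin by (intro Min_in) auto
  moreover have "\<forall>m\<in>?M. 0 \<le> m"
  proof -
    have A1: "0 \<le> E x y i (j-k) + g (drop (j-k) (take j y))" if "k \<in> {1..j}" for k
    proof -
      have "drop (j-k) (take j y) \<noteq> []" using blk_ne that assms by auto
      then have "0 < g (drop (j-k) (take j y))" by (rule gpos)
      then show ?thesis using E_nn[of x y i "j-k"] by linarith
    qed
    have A2: "0 \<le> E x y (i-k) j + h (drop (i-k) (take i x))" if "k \<in> {1..i}" for k
    proof -
      have "drop (i-k) (take i x) \<noteq> []" using blk_ne that assms by auto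
      then have "0 < h (drop (i-k) (take i x))" by (rule hpos)
      then show ?thesis using E_nn[of x y "i-k" j] by linarith
    qed
    have A0: "0 \<le> E x y (i-1) (j-1) + d (x!(i-1)) (y!(j-1)) powr p"
      using E_nn[of x y "i-1" "j-1"] by simp
    show ?thesis using A0 A1 A2 by blast
  qed
  ultimately have "0 \<le> Min ?M" by blast
  then show ?thesis unfolding E_def raw using p0 by (simp add: powr_powr)
qed


lemma E_sub_le:
  assumes "0 < i" "0 < j" "i \<le> length x" "j \<le> length y"
  shows "E x y i j \<le> E x y (i-1) (j-1) + d (x!(i-1)) (y!(j-1)) powr p"
  unfolding E_Min[OF assms] by (rule Min_le) auto

lemma E_ins_le:
  assumes "i \<le> length x" "1 \<le> k" "k \<le> j" "j \<le> length y"
  shows "E x y i j \<le> E x y i (j-k) + g (drop (j-k) (take j y))"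
proof (cases "i = 0")
  case False
  have iP: "0 < i" and jP: "0 < j" using assms False by auto
  show ?thesis unfolding E_Min[OF iP jP assms(1) assms(4)] using assms
    by (intro Min_le) auto
next
  case True
  show ?thesis
  proof (cases "k = j")
    case True
    then show ?thesis using \<open>i = 0\<close> assms by (simp add: E0j E00)
  next
    case False
    then have kk: "0 < j - k" using assms by simp
    have split: "take j y = take (j-k) y @ drop (j-k) (take j y)"
      using drop_take_split[of 0 "j-k" j y] assms by simp
    have "g (take j y) \<le> g (take (j-k) y) + g (drop (j-k) (take j y))"
      by (subst split, rule gsub) (use kk assms blk_ne in \<open>auto simp: take_eq_Nil\<close>)
    then show ?thesis using \<open>i = 0\<close> assms kk by (simp add: E0j)
  qed
qed

lemma E_del_le:
  assumes "j \<le> length y" "1 \<le> k" "k \<le> i" "i \<le> length x"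
  shows "E x y i j \<le> E x y (i-k) j + h (drop (i-k) (take i x))"
proof (cases "j = 0")
  case False
  have iP: "0 < i" and jP: "0 < j" using assms False by auto
  show ?thesis unfolding E_Min[OF iP jP assms(4) assms(1)] using assms
    by (intro Min_le) auto
next
  case True
  show ?thesis
  proof (cases "k = i")
    case True
    then show ?thesis using \<open>j = 0\<close> assms by (simp add: Ei0 E00)
  next
    case False
    then have kk: "0 < i - k" using assms by simp
    have split: "take i x = take (i-k) x @ drop (i-k) (take i x)"
      using drop_take_split[of 0 "i-k" i x] assms by simp
    have "h (take i x) \<le> h (take (i-k) x) + h (drop (i-k) (take i x))"
      by (subst split, rule hsub) (use kk assms blk_ne in \<open>auto simp: take_eq_Nil\<close>)
    then show ?thesis using \<open>j = 0\<close> assms kk by (simp add: Ei0)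
  qed
qed

lemma E_last:
  assumes "i \<le> length x" "j \<le> length y" "0 < i + j"
  shows "(0 < i \<and> 0 < j \<and> E x y i j = E x y (i-1) (j-1) + d (x!(i-1)) (y!(j-1)) powr p)
    \<or> (\<exists>k. 1 \<le> k \<and> k \<le> j \<and> E x y i j = E x y i (j-k) + g (drop (j-k) (take j y)))
    \<or> (\<exists>k. 1 \<le> k \<and> k \<le> i \<and> E x y i j = E x y (i-k) j + h (drop (i-k) (take i x)))"
proof (cases "i = 0 \<or> j = 0")
  case True
  then show ?thesis
  proof
    assume "i = 0"
    then have "0 < j" using assms by simp
    then have "E x y i j = E x y i (j-j) + g (drop (j-j) (take j y))"
      using \<open>i = 0\<close> assms by (simp add: E0j E00)
    then show ?thesis using \<open>0 < j\<close> by (intro disjI2 disjI1 exI[of _ j]) simp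
  next
    assume "j = 0"
    then have "0 < i" using assms by simp
    then have "E x y i j = E x y (i-i) j + h (drop (i-i) (take i x))"
      using \<open>j = 0\<close> assms by (simp add: Ei0 E00)
    then show ?thesis using \<open>0 < i\<close> by (intro disjI2 disjI2 exI[of _ i]) simp
  qed
next
  case False
  then have ij: "0 < i" "0 < j" by auto
  let ?M = "{E x y (i-1) (j-1) + d (x!(i-1)) (y!(j-1)) powr p}
          \<union> (\<lambda>k. E x y i (j-k) + g (drop (j-k) (take j y))) ` {1..j}
          \<union> (\<lambda>k. E x y (i-k) j + h (drop (i-k) (take i x))) ` {1..i}"
  have "Min ?M \<in> ?M" by (intro Min_in) auto
  then have "E x y i j \<in> ?M" using E_Min[OF ij assms(1,2)] by simp
  then show ?thesis using ij by auto
qed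

end

lemma tab_flip: "tab p d g h \<Longrightarrow> tab p (\<lambda>a b. d b a) h g"
  unfolding tab_def by auto

lemma E_sym: "tab p d g h \<Longrightarrow> tab.E p d g h x y i j = tab.E p (\<lambda>a b. d b a) h g y x j i"
  apply (frule tab_flip)
  apply (simp only: tab.E_def)
  apply (subst Dtab_transpose)
  apply (rule refl)
  done




lemma powr_sub_add:
  fixes a b c p :: real
  assumes "1 \<le> p" "0 \<le> a" "0 \<le> b" "0 \<le> c" "c \<le> a + b"
  shows "c powr (1/p) \<le> a powr (1/p) + b powr (1/p)"
proof -
  have p0: "0 < p" using assms by simp
  have "c powr (1/p) \<le> (a + b) powr (1/p)" using assms p0 by (intro powr_mono2) auto
  also have "\<dots> \<le> a powr (1/p) + b powr (1/p)"
    using minkowski2[OF assms(1), of "a powr (1/p)" 0 0 "b powr (1/p)"] assms p0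
    by (simp add: powr_powr)
  finally show ?thesis .
qed

context tab
begin

lemma split:
  assumes CL: "CL_gap_penalty g" and hinc: "increasing_gp h"
    and gd: "\<And>a b. g [b] - g [a] \<le> d a b powr p"
    and m0: "m0 \<le> j" and jl: "j \<le> length y" and kl: "k \<le> length z"
  shows "\<exists>k' R. k' \<le> k \<and> 0 \<le> R \<and> E y z m0 k' + R \<le> E y z j k \<and>
     (\<forall>P. drop k' (take k z) @ P \<noteq> [] \<longrightarrow> g (drop k' (take k z) @ P) \<le> g (drop m0 (take j y) @ P) + R)"
  using m0 jl kl
proof (induction "j+k" arbitrary: j k rule: less_induct)
  case less
  have ginc: "increasing_gp g" using CL unfolding CL_gap_penalty_def by auto
  show ?case
  proof (cases "j = m0")
    case True
    show ?thesis by (rule exI[of _ k], rule exI[of _ 0]) (simp add: True)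
  next
    case False
    then have jm: "m0 < j" using less.prems by simp
    have jk: "0 < j + k" using jm by simp
    from E_last[where x=y and y=z and i=j and j=k, OF less.prems(2) less.prems(3) jk]
    consider
      (sub) "0 < j" "0 < k" "E y z j k = E y z (j-1) (k-1) + d (y!(j-1)) (z!(k-1)) powr p"
    | (ins) s where "1 \<le> s" "s \<le> k" "E y z j k = E y z j (k-s) + g (drop (k-s) (take k z))"
    | (del) s where "1 \<le> s" "s \<le> j" "E y z j k = E y z (j-s) k + h (drop (j-s) (take j y))"
      by blast
    then show ?thesis
    proof cases
      case sub
      have "\<exists>k' R. k' \<le> k-1 \<and> 0 \<le> R \<and> E y z m0 k' + R \<le> E y z (j-1) (k-1) \<and>
         (\<forall>P. drop k' (take (k-1) z) @ P \<noteq> [] \<longrightarrow> g (drop k' (take (k-1) z) @ P) \<le> g (drop m0 (take (j-1) y) @ P) + R)"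
        by (rule less.hyps) (use sub jm less.prems in auto)
      then obtain k' R where IH: "k' \<le> k-1" "0 \<le> R" "E y z m0 k' + R \<le> E y z (j-1) (k-1)"
        "\<forall>P. drop k' (take (k-1) z) @ P \<noteq> [] \<longrightarrow> g (drop k' (take (k-1) z) @ P) \<le> g (drop m0 (take (j-1) y) @ P) + R"
        by blast
      define yc where "yc = y!(j-1)"
      define zc where "zc = z!(k-1)"
      have Zeq: "drop k' (take k z) = drop k' (take (k-1) z) @ [zc]"
        using drop_take_split[of k' "k-1" k z] drop_take_last[of k z] sub IH(1) less.prems
        unfolding zc_def by simp
      have Yeq: "drop m0 (take j y) = drop m0 (take (j-1) y) @ [yc]"
        using drop_take_split[of m0 "j-1" j y] drop_take_last[of j y] sub jm less.prems
        unfolding yc_def by simp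
      show ?thesis
      proof (intro exI[of _ k'] exI[of _ "R + d yc zc powr p"] conjI allI impI)
        show "k' \<le> k" using IH(1) by simp
        show "0 \<le> R + d yc zc powr p" using IH(2) by simp
        show "E y z m0 k' + (R + d yc zc powr p) \<le> E y z j k"
          using IH(3) sub(3) unfolding yc_def zc_def by simp
        fix P assume "drop k' (take k z) @ P \<noteq> []"
        have 1: "g (drop k' (take (k-1) z) @ [zc] @ P) \<le> g (drop m0 (take (j-1) y) @ [zc] @ P) + R"
          using IH(4)[rule_format, of "[zc] @ P"] by simp
        have 2: "g (drop m0 (take (j-1) y) @ [zc] @ P) = g (drop m0 (take (j-1) y) @ [yc] @ P) + (g [zc] - g [yc])"
          by (rule CL_subst[OF CL])
        have 3: "g [zc] - g [yc] \<le> d yc zc powr p" by (rule gd)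
        show "g (drop k' (take k z) @ P) \<le> g (drop m0 (take j y) @ P) + (R + d yc zc powr p)"
          unfolding Zeq Yeq using 1 2 3 by simp
      qed
    next
      case ins
      have "\<exists>k' R. k' \<le> k-s \<and> 0 \<le> R \<and> E y z m0 k' + R \<le> E y z j (k-s) \<and>
         (\<forall>P. drop k' (take (k-s) z) @ P \<noteq> [] \<longrightarrow> g (drop k' (take (k-s) z) @ P) \<le> g (drop m0 (take j y) @ P) + R)"
        by (rule less.hyps) (use ins jm less.prems in auto)
      then obtain k' R where IH: "k' \<le> k-s" "0 \<le> R" "E y z m0 k' + R \<le> E y z j (k-s)"
        "\<forall>P. drop k' (take (k-s) z) @ P \<noteq> [] \<longrightarrow> g (drop k' (take (k-s) z) @ P) \<le> g (drop m0 (take j y) @ P) + R"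
        by blast
      define U where "U = drop (k-s) (take k z)"
      define Z' where "Z' = drop k' (take (k-s) z)"
      define Y where "Y = drop m0 (take j y)"
      have Une: "U \<noteq> []" unfolding U_def using blk_ne ins less.prems by auto
      have Yne: "Y \<noteq> []" unfolding Y_def using jm less.prems by simp
      have Zeq: "drop k' (take k z) = Z' @ U"
        unfolding Z'_def U_def using drop_take_split[of k' "k-s" k z] IH(1) less.prems by simp
      show ?thesis
      proof (intro exI[of _ k'] exI[of _ "R + g U"] conjI allI impI)
        show "k' \<le> k" using IH(1) by simp
        show "0 \<le> R + g U" using IH(2) gpos[OF Une] by simp
        show "E y z m0 k' + (R + g U) \<le> E y z j k"
          using IH(3) ins(3) unfolding U_def by simp
        fix P assume "drop k' (take k z) @ P \<noteq> []"
        show "g (drop k' (take k z) @ P) \<le> g (drop m0 (take j y) @ P) + (R + g U)"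
        proof (cases "Z' @ P = []")
          case True
          then show ?thesis unfolding Zeq using gpos[of "Y @ P"] Yne IH(2)
            by (simp add: Y_def[symmetric])
        next
          case False
          have "g (Z' @ U @ P) = g ((Z' @ P) @ U)" by (rule CL_perm[OF CL]) (simp add: ac_simps)
          also have "\<dots> \<le> g (Z' @ P) + g U" by (rule gsub[OF False Une])
          also have "\<dots> \<le> g (Y @ P) + R + g U"
            using IH(4)[rule_format, of P] False unfolding Z'_def Y_def by simp
          finally show ?thesis unfolding Zeq Y_def by simp
        qed
      qed
    next
      case del
      define V where "V = drop (j-s) (take j y)"
      have Vne: "V \<noteq> []" unfolding V_def using blk_ne del less.prems by auto
      show ?thesis
      proof (cases "m0 \<le> j - s")
        case True
        have "\<exists>k' R. k' \<le> k \<and> 0 \<le> R \<and> E y z m0 k' + R \<le> E y z (j-s) k \<and>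
           (\<forall>P. drop k' (take k z) @ P \<noteq> [] \<longrightarrow> g (drop k' (take k z) @ P) \<le> g (drop m0 (take (j-s) y) @ P) + R)"
          by (rule less.hyps) (use del True less.prems in auto)
        then obtain k' R where IH: "k' \<le> k" "0 \<le> R" "E y z m0 k' + R \<le> E y z (j-s) k"
          "\<forall>P. drop k' (take k z) @ P \<noteq> [] \<longrightarrow> g (drop k' (take k z) @ P) \<le> g (drop m0 (take (j-s) y) @ P) + R"
          by blast
        have Yeq: "drop m0 (take j y) = drop m0 (take (j-s) y) @ V"
          unfolding V_def using drop_take_split[of m0 "j-s" j y] True less.prems by simp
        show ?thesis
        proof (intro exI[of _ k'] exI[of _ "R + h V"] conjI allI impI)
          show "k' \<le> k" using IH(1) by simp
          show "0 \<le> R + h V" using IH(2) hpos[OF Vne] by simp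
          show "E y z m0 k' + (R + h V) \<le> E y z j k"
            using IH(3) del(3) unfolding V_def by simp
          fix P assume ne: "drop k' (take k z) @ P \<noteq> []"
          have "g (drop k' (take k z) @ P) \<le> g (drop k' (take k z) @ V @ P)"
            using ginc ne unfolding increasing_gp_def by blast
          also have "\<dots> \<le> g (drop m0 (take (j-s) y) @ V @ P) + R"
            using IH(4)[rule_format, of "V @ P"] ne by simp
          finally show "g (drop k' (take k z) @ P) \<le> g (drop m0 (take j y) @ P) + (R + h V)"
            unfolding Yeq using hpos[OF Vne] by simp
        qed
      next
        case False
        then have js: "j - s < m0" by simp
        have "E y z m0 k \<le> E y z (m0 - (m0 - (j-s))) k + h (drop (m0 - (m0 - (j-s))) (take m0 y))"
          by (rule E_del_le) (use js less.prems jm in auto)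
        also have "m0 - (m0 - (j-s)) = j - s" using js by simp
        finally have e1: "E y z m0 k \<le> E y z (j-s) k + h (drop (j-s) (take m0 y))" .
        have Veq: "V = drop (j-s) (take m0 y) @ drop m0 (take j y)"
          unfolding V_def using drop_take_split[of "j-s" m0 j y] js jm less.prems by simp
        have ne1: "drop (j-s) (take m0 y) \<noteq> []" using js jm less.prems by simp
        have "h (drop (j-s) (take m0 y) @ []) \<le> h (drop (j-s) (take m0 y) @ drop m0 (take j y) @ [])"
          using hinc ne1 unfolding increasing_gp_def by blast
        then have e2: "h (drop (j-s) (take m0 y)) \<le> h V" unfolding Veq by simp
        show ?thesis
        proof (intro exI[of _ k] exI[of _ 0] conjI allI impI)
          show "E y z m0 k + 0 \<le> E y z j k" using e1 e2 del(3) unfolding V_def by simp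
          fix P assume ne: "drop k (take k z) @ P \<noteq> []"
          then have "P \<noteq> []" by simp
          then have "g ([] @ P) \<le> g ([] @ drop m0 (take j y) @ P)"
            using ginc unfolding increasing_gp_def by blast
          then show "g (drop k (take k z) @ P) \<le> g (drop m0 (take j y) @ P) + 0" by simp
        qed simp_all
      qed
    qed
  qed
qed

lemma E_diag:
  assumes "\<And>a. d a a = 0" and "i \<le> length x"
  shows "E x x i i = 0"
  using assms(2)
proof (induction i)
  case 0 then show ?case by (simp add: E00)
next
  case (Suc i)
  have "E x x (Suc i) (Suc i) \<le> E x x i i + d (x!i) (x!i) powr p"
    using E_sub_le[of "Suc i" "Suc i" x x] Suc.prems by simp
  then have "E x x (Suc i) (Suc i) \<le> 0" using Suc assms(1) by simp
  then show ?case using E_nn[of x x "Suc i" "Suc i"] by simp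
qed

lemma E_sep:
  assumes sep: "\<And>a b. d a b = 0 \<Longrightarrow> a = b"
  shows "i \<le> length x \<Longrightarrow> j \<le> length y \<Longrightarrow> E x y i j = 0 \<Longrightarrow> i = j \<and> take i x = take j y"
proof (induction "i+j" arbitrary: i j rule: less_induct)
  case less
  show ?case
  proof (cases "i + j = 0")
    case True then show ?thesis by simp
  next
    case False
    then have ij: "0 < i + j" by simp
    from E_last[OF less.prems(1,2) ij] consider
      (sub) "0 < i" "0 < j" "E x y i j = E x y (i-1) (j-1) + d (x!(i-1)) (y!(j-1)) powr p"
    | (ins) k where "1 \<le> k" "k \<le> j" "E x y i j = E x y i (j-k) + g (drop (j-k) (take j y))"
    | (del) k where "1 \<le> k" "k \<le> i" "E x y i j = E x y (i-k) j + h (drop (i-k) (take i x))"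
      by blast
    then show ?thesis
    proof cases
      case sub
      have z1: "E x y (i-1) (j-1) = 0" and z2: "d (x!(i-1)) (y!(j-1)) powr p = 0"
        using sub(3) less.prems(3) E_nn[of x y "i-1" "j-1"] powr_ge_zero[of "d (x!(i-1)) (y!(j-1))" p]
        by linarith+
      have xy: "x!(i-1) = y!(j-1)" using z2 sep by simp
      have IH: "i-1 = j-1 \<and> take (i-1) x = take (j-1) y"
        by (rule less.hyps) (use sub less.prems z1 in auto)
      have tx: "take i x = take (i-1) x @ [x!(i-1)]"
        using sub less.prems by (metis Suc_pred' take_Suc_conv_app_nth Suc_le_lessD)
      have ty: "take j y = take (j-1) y @ [y!(j-1)]"
        using sub less.prems by (metis Suc_pred' take_Suc_conv_app_nth Suc_le_lessD)
      have ieq: "i = j" using IH sub by linarith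
      have t1: "take (i-1) x = take (j-1) y" using IH by blast
      have "take i x = take j y" unfolding tx ty by (simp only: t1 xy)
      then show ?thesis using ieq by simp
    next
      case ins
      have "0 < g (drop (j-k) (take j y))" using gpos blk_ne ins less.prems by auto
      then show ?thesis using ins(3) less.prems(3) E_nn[of x y i "j-k"] by simp
    next
      case del
      have "0 < h (drop (i-k) (take i x))" using hpos blk_ne del less.prems by auto
      then show ?thesis using del(3) less.prems(3) E_nn[of x y "i-k" j] by simp
    qed
  qed
qed

end




context tab
begin

lemma tri:
  assumes CLg: "CL_gap_penalty g" and CLh: "CL_gap_penalty h"
    and gd: "\<And>a b. g [b] - g [a] \<le> d a b powr p" and hd: "\<And>a b. h [a] - h [b] \<le> d a b powr p"
    and dtri: "\<And>a b c. d a c \<le> d a b + d b c"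
    and bnd: "i \<le> length x" "j \<le> length y" "k \<le> length z"
  shows "E x z i k powr (1/p) \<le> E x y i j powr (1/p) + E y z j k powr (1/p)"
  using bnd
proof (induction "i+j+k" arbitrary: i j k rule: less_induct)
  case less
  have tab1: "tab p d g h" by unfold_locales (use p1 dnn gg hg in auto)
  have tab2: "tab p (\<lambda>a b. d b a) h g" by (rule tab_flip[OF tab1])
  have hinc: "increasing_gp h" using CLh unfolding CL_gap_penalty_def by auto
  have ginc: "increasing_gp g" using CLg unfolding CL_gap_penalty_def by auto
  have hd': "\<And>a b. h [b] - h [a] \<le> (\<lambda>a b. d b a) a b powr p" using hd by simp
  note sp2 = tab.split[OF tab2 CLh ginc hd']
  have sym: "\<And>i j. E x y i j = tab.E p (\<lambda>a b. d b a) h g y x j i"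
    using E_sym[OF tab1] by simp
  note ms = mink_step[OF p1]
  show ?case
  proof (cases "i + j = 0")
    case True
    then have i0: "i = 0" and j0: "j = 0" by auto
    have "E x z 0 k = E y z 0 k"
      by (cases "k = 0") (simp_all add: E00 E0j less.prems)
    then show ?thesis using i0 j0 by (simp add: E00)
  next
    case False
    then have ij: "0 < i + j" by simp
    from E_last[OF less.prems(1,2) ij] consider
      (sub) "0 < i" "0 < j" "E x y i j = E x y (i-1) (j-1) + d (x!(i-1)) (y!(j-1)) powr p"
    | (ins) r where "1 \<le> r" "r \<le> j" "E x y i j = E x y i (j-r) + g (drop (j-r) (take j y))"
    | (del) r where "1 \<le> r" "r \<le> i" "E x y i j = E x y (i-r) j + h (drop (i-r) (take i x))"
      by blast
    then show ?thesis
    proof cases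
      case del
      define X where "X = drop (i-r) (take i x)"
      have Xp: "0 < h X" unfolding X_def using hpos blk_ne del less.prems by auto
      have IH: "E x z (i-r) k powr (1/p) \<le> E x y (i-r) j powr (1/p) + E y z j k powr (1/p)"
        by (rule less.hyps) (use del less.prems in auto)
      have h1: "E x z i k \<le> E x z (i-r) k + h X"
        unfolding X_def by (rule E_del_le) (use del less.prems in auto)
      show ?thesis
        by (rule ms[where a="h X" and b=0, OF E_nn E_nn E_nn E_nn _ _ _ h1 IH])
           (use Xp del(3) X_def in auto)
    next
      case ins
      define Y where "Y = drop (j-r) (take j y)"
      have Yp: "0 < g Y" unfolding Y_def using gpos blk_ne ins less.prems by auto
      obtain k' R where S: "k' \<le> k" "0 \<le> R" "E y z (j-r) k' + R \<le> E y z j k"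
        "\<forall>P. drop k' (take k z) @ P \<noteq> [] \<longrightarrow> g (drop k' (take k z) @ P) \<le> g (Y @ P) + R"
        using split[OF CLg hinc gd, of "j-r" j y k z] ins less.prems unfolding Y_def by auto
      have IH: "E x z i k' powr (1/p) \<le> E x y i (j-r) powr (1/p) + E y z (j-r) k' powr (1/p)"
        by (rule less.hyps) (use ins less.prems S(1) in auto)
      show ?thesis
      proof (cases "k' = k")
        case True
        show ?thesis
          by (rule ms[where a="g Y" and b=R and c=0, OF E_nn E_nn E_nn E_nn _ _ _ _ IH])
             (use Yp S True ins(3) Y_def in auto)
      next
        case False
        define Z where "Z = drop k' (take k z)"
        have Zne: "Z \<noteq> []" unfolding Z_def using S(1) False less.prems by simp
        have c: "g Z \<le> g Y + R" using S(4)[rule_format, of "[]"] Zne unfolding Z_def by simp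
        have h1: "E x z i k \<le> E x z i (k - (k-k')) + g (drop (k - (k-k')) (take k z))"
          by (rule E_ins_le) (use S(1) False less.prems in auto)
        then have h1': "E x z i k \<le> E x z i k' + g Z" using S(1) unfolding Z_def by simp
        show ?thesis
          by (rule ms[where a="g Y" and b=R, OF E_nn E_nn E_nn E_nn _ _ _ h1' IH])
             (use Yp S ins(3) Y_def gpos[OF Zne] powr_sub_add[OF p1 _ _ _ c] in auto)
      qed
    next
      case sub
      have jk: "0 < j + k" using sub by simp
      from E_last[OF less.prems(2,3) jk] consider
        (sub2) "0 < j" "0 < k" "E y z j k = E y z (j-1) (k-1) + d (y!(j-1)) (z!(k-1)) powr p"
      | (ins2) s where "1 \<le> s" "s \<le> k" "E y z j k = E y z j (k-s) + g (drop (k-s) (take k z))"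
      | (del2) s where "1 \<le> s" "s \<le> j" "E y z j k = E y z (j-s) k + h (drop (j-s) (take j y))"
        by blast
      then show ?thesis
      proof cases
        case sub2
        have IH: "E x z (i-1) (k-1) powr (1/p) \<le> E x y (i-1) (j-1) powr (1/p) + E y z (j-1) (k-1) powr (1/p)"
          by (rule less.hyps) (use sub sub2 less.prems in auto)
        have h1: "E x z i k \<le> E x z (i-1) (k-1) + d (x!(i-1)) (z!(k-1)) powr p"
          by (rule E_sub_le) (use sub sub2 less.prems in auto)
        have rt: "(w powr p) powr (1/p) = w" if "0 \<le> w" for w :: real
          using that p0 by (simp add: powr_powr)
        have h3: "(d (x!(i-1)) (z!(k-1)) powr p) powr (1/p) \<le>
            (d (x!(i-1)) (y!(j-1)) powr p) powr (1/p) + (d (y!(j-1)) (z!(k-1)) powr p) powr (1/p)"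
          using dtri dnn rt by simp
        show ?thesis
          by (rule ms[OF E_nn E_nn E_nn E_nn _ _ _ h1 IH h3]) (use sub sub2 in auto)
      next
        case ins2
        define U where "U = drop (k-s) (take k z)"
        have Up: "0 < g U" unfolding U_def using gpos blk_ne ins2 less.prems by auto
        have IH: "E x z i (k-s) powr (1/p) \<le> E x y i j powr (1/p) + E y z j (k-s) powr (1/p)"
          by (rule less.hyps) (use ins2 less.prems in auto)
        have h1: "E x z i k \<le> E x z i (k-s) + g U"
          unfolding U_def by (rule E_ins_le) (use ins2 less.prems in auto)
        show ?thesis
          by (rule ms[where a=0 and b="g U", OF E_nn E_nn E_nn E_nn _ _ _ h1 IH])
             (use Up ins2(3) U_def in auto)
      next
        case del2
        define V where "V = drop (j-s) (take j y)"
        have Vp: "0 < h V" unfolding V_def using hpos blk_ne del2 less.prems by auto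
        obtain i' R where S: "i' \<le> i" "0 \<le> R" "tab.E p (\<lambda>a b. d b a) h g y x (j-s) i' + R \<le> tab.E p (\<lambda>a b. d b a) h g y x j i"
          "\<forall>P. drop i' (take i x) @ P \<noteq> [] \<longrightarrow> h (drop i' (take i x) @ P) \<le> h (V @ P) + R"
          using sp2[of "j-s" j y i x] del2 less.prems unfolding V_def by auto
        have S3: "E x y i' (j-s) + R \<le> E x y i j" using S(3) sym by simp
        have IH: "E x z i' k powr (1/p) \<le> E x y i' (j-s) powr (1/p) + E y z (j-s) k powr (1/p)"
          by (rule less.hyps) (use del2 less.prems S(1) sub in auto)
        show ?thesis
        proof (cases "i' = i")
          case True
          show ?thesis
            by (rule ms[where a=R and b="h V" and c=0, OF E_nn E_nn E_nn E_nn _ _ _ _ IH])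
               (use Vp S S3 True del2(3) V_def in auto)
        next
          case False
          define X where "X = drop i' (take i x)"
          have Xne: "X \<noteq> []" unfolding X_def using S(1) False less.prems by simp
          have c: "h X \<le> R + h V" using S(4)[rule_format, of "[]"] Xne unfolding X_def by simp
          have h1: "E x z i k \<le> E x z (i - (i-i')) k + h (drop (i - (i-i')) (take i x))"
            by (rule E_del_le) (use S(1) False less.prems in auto)
          then have h1': "E x z i k \<le> E x z i' k + h X" using S(1) unfolding X_def by simp
          show ?thesis
            by (rule ms[where a=R and b="h V", OF E_nn E_nn E_nn E_nn _ _ _ h1' IH])
               (use Vp S S3 del2(3) V_def hpos[OF Xne] powr_sub_add[OF p1 _ _ _ c] in auto)
        qed
      qed
    qed
  qed
qed

end



theorem theorem3p10:
  fixes p :: real and d :: "'a \<Rightarrow> 'a \<Rightarrow> real" and \<gamma> \<delta> :: "'a list \<Rightarrow> real"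
  assumes "1 \<le> p"
    and "quasi_metric d" and "separating d"
    and "CL_gap_penalty \<gamma>" and "CL_gap_penalty \<delta>"
    and "\<forall>a b. \<gamma> [b] - \<gamma> [a] \<le> (d a b) powr p"
    and "\<forall>a b. \<delta> [a] - \<delta> [b] \<le> (d a b) powr p"
  shows "quasi_metric (lp_edit_distance p d (\<lambda>w. (\<gamma> w) powr (1 / p)) (\<lambda>w. (\<delta> w) powr (1 / p)))
       \<and> separating (lp_edit_distance p d (\<lambda>w. (\<gamma> w) powr (1 / p)) (\<lambda>w. (\<delta> w) powr (1 / p)))"
proof -
  have dnn: "\<And>a b. 0 \<le> d a b" and dtri: "\<And>a b c. d a c \<le> d a b + d b c"
    using assms(2) unfolding quasi_metric_def by auto
  have d0: "\<And>a. d a a = 0" using assms(2) unfolding quasi_metric_def by blast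
  have sepd: "\<And>a b. d a b = 0 \<Longrightarrow> a = b" using assms(3) unfolding separating_def by blast
  have gg: "gap_penalty \<gamma>" and hg: "gap_penalty \<delta>"
    using assms(4,5) unfolding CL_gap_penalty_def by auto
  interpret T: tab p d \<gamma> \<delta> by unfold_locales (use assms(1) dnn gg hg in auto)
  define q where "q = lp_edit_distance p d (\<lambda>w. (\<gamma> w) powr (1 / p)) (\<lambda>w. (\<delta> w) powr (1 / p))"
  have LE: "q x y = T.E x y (length x) (length y) powr (1/p)" for x y
    unfolding q_def lp_edit_distance_def by (rule T.DT_E)
  have nn: "0 \<le> q x y" for x y unfolding LE by simp
  have zero: "q x x = 0" for x unfolding LE using T.E_diag[OF d0] by simp
  have sep: "x = y" if "q x y = 0" for x y
  proof -
    have "T.E x y (length x) (length y) = 0" using that unfolding LE by simp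
    then have "length x = length y \<and> take (length x) x = take (length y) y"
      using T.E_sep[OF sepd] by blast
    then show ?thesis by simp
  qed
  have tri: "q x z \<le> q x y + q y z" for x y z
    unfolding LE by (rule T.tri[OF assms(4,5)]) (use assms(6,7) dtri in auto)
  have "quasi_metric q" unfolding quasi_metric_def using nn zero sep tri by metis
  moreover have "separating q" unfolding separating_def using sep by blast
  ultimately show ?thesis unfolding q_def by blast
qed


end
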